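(* Let $n \ge 3$ be an integer and let $I$ be a degree-based topological index with coefficients $c_{12},c_{13},c_{22},c_{23},c_{33}$. Define $c'_{12} = c_{12}-4c_{22}+3c_{23}$, $c'_{13} = c_{13}-3c_{22}+2c_{23}$, $c'_{33} = c_{22}-2c_{23}+c_{33}$. If $\max\{c'_{12},c'_{13}\}<\min\{0,-c'_{33}\}$, then the cycle $C_n$ on $n$ vertices is, up to isomorphism, the only graph in $\mathcal{G}_3(n,n)$ that maximizes $I$.
   Context: For integers $n,m$, $\mathcal{G}_3(n,m)$ denotes the set of simple connected undirected graphs (chemical graphs) with $n$ vertices, $m$ edges and maximum degree at most $3$; in particular $\mathcal{G}_3(n,n)$ is the set of connected unicyclic graphs of order $n$ with maximum degree at most $3$. For a graph $G$ and $1\le i\le j$, an $ij$-edge is an edge whose endpoints have degrees $i$ and $j$, and $m_{ij}$ denotes the number of $ij$-edges of $G$. A degree-based topological index $I$ is a function on chemical graphs of order $n\ge 3$ of the form $I(G)=c_{12}m_{12}+c_{13}m_{13}+c_{22}m_{22}+c_{23}m_{23}+c_{33}m_{33}$, where the $c_{ij}$ are fixed real numbers. *)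

theory Defs
  imports Main Complex_Main
begin

definition simple_graph :: "nat \<Rightarrow> nat set set \<Rightarrow> bool" where
  "simple_graph n E \<longleftrightarrow> (\<forall>e\<in>E. \<exists>u v. e = {u, v} \<and> u \<noteq> v \<and> u < n \<and> v < n)"

definition degree :: "nat set set \<Rightarrow> nat \<Rightarrow> nat" where
  "degree E v = card {e\<in>E. v \<in> e}"

definition adj_rel :: "nat set set \<Rightarrow> (nat \<times> nat) set" where
  "adj_rel E = {(u, v). {u, v} \<in> E}"

definition connected_graph :: "nat \<Rightarrow> nat set set \<Rightarrow> bool" where
  "connected_graph n E \<longleftrightarrow> (\<forall>u<n. \<forall>v<n. (u, v) \<in> (adj_rel E)\<^sup>*)"

definition chem_graphs :: "nat \<Rightarrow> nat \<Rightarrow> nat set set set" where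
  "chem_graphs n m = {E. simple_graph n E \<and> connected_graph n E \<and> card E = m
                        \<and> (\<forall>v<n. degree E v \<le> 3)}"

definition m_ij :: "nat set set \<Rightarrow> nat \<Rightarrow> nat \<Rightarrow> nat" where
  "m_ij E i j = card {e\<in>E. \<exists>u v. e = {u, v} \<and> u \<noteq> v \<and>
       ((degree E u = i \<and> degree E v = j) \<or> (degree E u = j \<and> degree E v = i))}"

definition topo_index ::
  "real \<Rightarrow> real \<Rightarrow> real \<Rightarrow> real \<Rightarrow> real \<Rightarrow> nat set set \<Rightarrow> real" where
  "topo_index c12 c13 c22 c23 c33 E =
     c12 * m_ij E 1 2 + c13 * m_ij E 1 3 + c22 * m_ij E 2 2 + c23 * m_ij E 2 3 + c33 * m_ij E 3 3"

definition cycle_graph :: "nat \<Rightarrow> nat set set" where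
  "cycle_graph n = {{i, Suc i mod n} | i. i < n}"

definition graph_iso :: "nat \<Rightarrow> nat set set \<Rightarrow> nat set set \<Rightarrow> bool" where
  "graph_iso n E F \<longleftrightarrow> (\<exists>f. bij_betw f {0..<n} {0..<n} \<and> (\<lambda>e. f ` e) ` E = F)"

end

theory Submission
  imports Defs
begin


lemma closure_lemma:
  assumes "(u, w) \<in> (adj_rel E)\<^sup>*" "u \<in> S"
    and "\<And>x y. {x, y} \<in> E \<Longrightarrow> x \<in> S \<Longrightarrow> y \<in> S"
  shows "w \<in> S"
  using assms(1,2)
proof (induction rule: rtrancl_induct)
  case base then show ?case by simp
next
  case (step y z) then show ?case using assms(3) by (auto simp: adj_rel_def)
qed

lemma simple_mem:
  assumes "simple_graph n E" "e \<in> E" "x \<in> e" shows "x < n"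
  using assms unfolding simple_graph_def by fastforce

lemma simple_ne:
  assumes "simple_graph n E" "{x, y} \<in> E" shows "x \<noteq> y"
proof
  assume "x = y"
  then obtain u v where "{x} = {u, v}" "u \<noteq> v" using assms unfolding simple_graph_def by fastforce
  then show False by (metis insert_iff singletonD)
qed

lemma crossing_exists:
  assumes "connected_graph n E" "s \<in> S" "s < n" "v < n" "v \<notin> S"
  shows "\<exists>x y. x \<in> S \<and> y \<notin> S \<and> {x, y} \<in> E"
  using closure_lemma[of s v E S] assms unfolding connected_graph_def by blast

lemma crossing_count:
  assumes "finite E" "simple_graph n E" "connected_graph n E"
  shows "S \<subseteq> {0..<n} \<Longrightarrow> S \<noteq> {} \<Longrightarrow> card ({0..<n} - S) = k \<Longrightarrow> k \<le> card {e\<in>E. \<not> e \<subseteq> S}"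
proof (induction k arbitrary: S)
  case 0 then show ?case by simp
next
  case (Suc k)
  then obtain v where v: "v < n" "v \<notin> S" by (metis Diff_iff atLeastLessThan_iff card.empty equals0I nat.distinct(1))
  obtain s where s: "s \<in> S" using Suc.prems by blast
  have "s < n" using s Suc.prems by auto
  obtain x y where xy: "x \<in> S" "y \<notin> S" "{x, y} \<in> E"
    using crossing_exists[OF assms(3) s \<open>s < n\<close> v] by blast
  have yn: "y < n" using simple_mem[OF assms(2) xy(3)] by simp
  let ?S = "insert y S"
  have "card ({0..<n} - ?S) = k"
  proof -
    have "{0..<n} - ?S = ({0..<n} - S) - {y}" by auto
    then show ?thesis using Suc.prems yn xy(2) by simp
  qed
  then have IH: "k \<le> card {e\<in>E. \<not> e \<subseteq> ?S}" using Suc.IH[of ?S] Suc.prems yn by auto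
  have sub: "insert {x,y} {e\<in>E. \<not> e \<subseteq> ?S} \<subseteq> {e\<in>E. \<not> e \<subseteq> S}" using xy by auto
  have nin: "{x,y} \<notin> {e\<in>E. \<not> e \<subseteq> ?S}" using xy by auto
  have "card (insert {x,y} {e\<in>E. \<not> e \<subseteq> ?S}) \<le> card {e\<in>E. \<not> e \<subseteq> S}"
    by (rule card_mono) (use assms(1) sub in auto)
  then show ?case using IH nin assms(1) by simp
qed

definition Tij :: "nat set set \<Rightarrow> nat \<Rightarrow> nat \<Rightarrow> nat set \<Rightarrow> nat" where
  "Tij E i j e = (if \<exists>u v. e = {u, v} \<and> u \<noteq> v \<and>
       ((degree E u = i \<and> degree E v = j) \<or> (degree E u = j \<and> degree E v = i)) then 1 else 0)"

definition cnt :: "nat set set \<Rightarrow> nat \<Rightarrow> nat set \<Rightarrow> nat" where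
  "cnt E k e = card {x\<in>e. degree E x = k}"

lemma card_filter_sum: "finite A \<Longrightarrow> card {x\<in>A. P x} = (\<Sum>x\<in>A. if P x then 1 else 0)"
  by (simp add: sum.If_cases Int_def conj_commute)

lemma m_ij_sum: "finite E \<Longrightarrow> m_ij E i j = (\<Sum>e\<in>E. Tij E i j e)"
  unfolding m_ij_def Tij_def by (rule card_filter_sum)

lemma T_pair: "u \<noteq> v \<Longrightarrow> (\<exists>u' v'. {u,v} = {u',v'} \<and> u' \<noteq> v' \<and> Q u' v') \<longleftrightarrow> Q u v \<or> Q v u"
  by (auto simp: doubleton_eq_iff)

lemma Tij_pair: "u \<noteq> v \<Longrightarrow> Tij E i j {u,v} = (if (degree E u = i \<and> degree E v = j) \<or> (degree E u = j \<and> degree E v = i) then 1 else 0)"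
  unfolding Tij_def by (subst T_pair) auto

lemma cnt_pair: "u \<noteq> v \<Longrightarrow> cnt E k {u,v} = (if degree E u = k then 1 else 0) + (if degree E v = k then 1 else 0)"
proof -
  assume uv: "u \<noteq> v"
  have "{x\<in>{u,v}. degree E x = k} = (if degree E u = k then {u} else {}) \<union> (if degree E v = k then {v} else {})"
    by auto
  then show ?thesis unfolding cnt_def using uv by (simp add: card_Un_disjoint)
qed

lemma per_edge:
  assumes "e = {u, v}" "u \<noteq> v" "degree E u \<in> {1,2,3}" "degree E v \<in> {1,2,3}"
    "\<not> (degree E u = 1 \<and> degree E v = 1)"
  shows "cnt E 1 e = Tij E 1 2 e + Tij E 1 3 e"
    "cnt E 2 e = Tij E 1 2 e + 2 * Tij E 2 2 e + Tij E 2 3 e"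
    "cnt E 3 e = Tij E 1 3 e + Tij E 2 3 e + 2 * Tij E 3 3 e"
    "Tij E 1 2 e + Tij E 1 3 e + Tij E 2 2 e + Tij E 2 3 e + Tij E 3 3 e = 1"
  unfolding assms(1) Tij_pair[OF assms(2)] cnt_pair[OF assms(2)]
  using assms(3-5) by (auto split: if_splits)

lemma double_count:
  assumes "finite E" "\<forall>e\<in>E. e \<subseteq> {0..<n}"
  shows "(\<Sum>e\<in>E. card {x\<in>e. P x}) = (\<Sum>v\<in>{v\<in>{0..<n}. P v}. degree E v)"
proof -
  have "(\<Sum>e\<in>E. card {x\<in>e. P x}) = (\<Sum>e\<in>E. \<Sum>v\<in>{0..<n}. if v \<in> e \<and> P v then 1 else 0)"
  proof (rule sum.cong)
    fix e assume "e \<in> E"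
    then have "e \<subseteq> {0..<n}" using assms(2) by blast
    then have "{x\<in>e. P x} = {v\<in>{0..<n}. v \<in> e \<and> P v}" by blast
    then show "card {x\<in>e. P x} = (\<Sum>v\<in>{0..<n}. if v \<in> e \<and> P v then 1 else 0)"
      using card_filter_sum[of "{0..<n}" "\<lambda>v. v \<in> e \<and> P v"] by simp
  qed simp
  also have "\<dots> = (\<Sum>v\<in>{0..<n}. \<Sum>e\<in>E. if v \<in> e \<and> P v then 1 else 0)"
    by (rule sum.swap)
  also have "\<dots> = (\<Sum>v\<in>{0..<n}. if P v then degree E v else 0)"
  proof (rule sum.cong)
    fix v
    show "(\<Sum>e\<in>E. if v \<in> e \<and> P v then 1 else 0) = (if P v then degree E v else 0)"
      unfolding degree_def using assms(1) by (simp add: card_filter_sum)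
  qed simp
  also have "\<dots> = (\<Sum>v\<in>{v\<in>{0..<n}. P v}. degree E v)"
    using sum.inter_filter[of "{0..<n}" "degree E" P] by simp
  finally show ?thesis .
qed

lemma deg_pos:
  assumes "finite E" "connected_graph n E" "n \<ge> 2" "v < n"
  shows "degree E v \<ge> 1"
proof (rule ccontr)
  assume "\<not> degree E v \<ge> 1"
  then have "card {e\<in>E. v \<in> e} = 0" unfolding degree_def by simp
  then have none: "{e\<in>E. v \<in> e} = {}" using assms(1) by simp
  define w where "w = (if v = 0 then 1 else (0::nat))"
  have w: "w < n" "w \<noteq> v" using assms(3,4) unfolding w_def by auto
  have "(v, w) \<in> (adj_rel E)\<^sup>*" using assms(2,4) w unfolding connected_graph_def by blast
  then have "w \<in> {v}" by (rule closure_lemma) (use none in auto)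
  then show False using w by simp
qed

lemma no_11:
  assumes "finite E" "connected_graph n E" "n \<ge> 3" "u < n" "v < n" "{u, v} \<in> E"
    "degree E u = 1" "degree E v = 1"
  shows False
proof -
  define w where "w = (if 0 \<noteq> u \<and> 0 \<noteq> v then 0 else if 1 \<noteq> u \<and> 1 \<noteq> v then 1 else (2::nat))"
  have w: "w < n" "w \<noteq> u" "w \<noteq> v" using assms(3) unfolding w_def by auto
  have cl: "y \<in> {u, v}" if "{x, y} \<in> E" "x \<in> {u, v}" for x y
  proof -
    from that(2) consider "x = u" | "x = v" by auto
    then show ?thesis
    proof cases
      case 1
      have "card {e\<in>E. u \<in> e} = 1" using assms(7) unfolding degree_def .
      then obtain e0 where "{e\<in>E. u \<in> e} = {e0}" by (rule card_1_singletonE)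
      note e0 = this
      have "{x, y} \<in> {e\<in>E. u \<in> e}" using that 1 by simp
      moreover have "{u, v} \<in> {e\<in>E. u \<in> e}" using assms(6) by simp
      ultimately have "{x, y} = {u, v}" unfolding e0 by simp
      moreover have "y \<in> {x, y}" by simp
      ultimately show ?thesis by (simp only:)
    next
      case 2
      have "card {e\<in>E. v \<in> e} = 1" using assms(8) unfolding degree_def .
      then obtain e0 where "{e\<in>E. v \<in> e} = {e0}" by (rule card_1_singletonE)
      note e0 = this
      have "{x, y} \<in> {e\<in>E. v \<in> e}" using that 2 by simp
      moreover have "{u, v} \<in> {e\<in>E. v \<in> e}" using assms(6) by simp
      ultimately have "{x, y} = {u, v}" unfolding e0 by simp
      moreover have "y \<in> {x, y}" by simp
      ultimately show ?thesis by (simp only:)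
    qed
  qed
  have "(u, w) \<in> (adj_rel E)\<^sup>*" using assms(2,4) w unfolding connected_graph_def by blast
  moreover have "u \<in> {u, v}" by simp
  ultimately have "w \<in> {u, v}" using closure_lemma[where S="{u,v}"] cl by blast
  then show False using w by simp
qed

lemma sum_cnt:
  assumes "finite E" "\<forall>e\<in>E. e \<subseteq> {0..<n}"
  shows "(\<Sum>e\<in>E. cnt E k e) = k * card {v\<in>{0..<n}. degree E v = k}"
proof -
  have "(\<Sum>e\<in>E. cnt E k e) = (\<Sum>v\<in>{v\<in>{0..<n}. degree E v = k}. degree E v)"
    unfolding cnt_def by (rule double_count[OF assms])
  also have "\<dots> = (\<Sum>v\<in>{v\<in>{0..<n}. degree E v = k}. k)" by (rule sum.cong) auto
  finally show ?thesis by simp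
qed

lemma key:
  assumes G: "E \<in> chem_graphs n n" and n3: "n \<ge> 3"
  shows "topo_index c12 c13 c22 c23 c33 E = real n * c22 + real (m_ij E 1 2) * (c12 - 4*c22 + 3*c23)
           + real (m_ij E 1 3) * (c13 - 3*c22 + 2*c23) + real (m_ij E 3 3) * (c22 - 2*c23 + c33)"
    and "m_ij E 3 3 \<le> m_ij E 1 2 + m_ij E 1 3"
    and "m_ij E 1 2 + m_ij E 1 3 = 0 \<Longrightarrow> \<forall>v<n. degree E v = 2"
proof -
  have simple: "simple_graph n E" and conn: "connected_graph n E" and cardE: "card E = n"
    and deg3: "\<forall>v<n. degree E v \<le> 3" using G unfolding chem_graphs_def by auto
  have fin: "finite E" using cardE n3 by (metis card_ge_0_finite le_zero_eq not_gr_zero numeral_3_eq_3 Suc_neq_Zero)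
  have sub: "\<forall>e\<in>E. e \<subseteq> {0..<n}" using simple_mem[OF simple] by auto
  have degs: "degree E v \<in> {1,2,3}" if "v < n" for v
    using deg_pos[OF fin conn _ that] n3 deg3 that by auto
  have pe: "cnt E 1 e = Tij E 1 2 e + Tij E 1 3 e
    \<and> cnt E 2 e = Tij E 1 2 e + 2 * Tij E 2 2 e + Tij E 2 3 e
    \<and> cnt E 3 e = Tij E 1 3 e + Tij E 2 3 e + 2 * Tij E 3 3 e
    \<and> Tij E 1 2 e + Tij E 1 3 e + Tij E 2 2 e + Tij E 2 3 e + Tij E 3 3 e = 1" if "e \<in> E" for e
  proof -
    have "\<exists>u v. e = {u, v} \<and> u \<noteq> v \<and> u < n \<and> v < n"
      using simple that unfolding simple_graph_def by (rule bspec)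
    then obtain u v where uv: "e = {u, v}" "u \<noteq> v" "u < n" "v < n" by blast
    have uvE: "{u, v} \<in> E" using uv(1) that by simp
    have "\<not> (degree E u = 1 \<and> degree E v = 1)" using no_11[OF fin conn n3 uv(3,4) uvE] by blast
    note pe4 = per_edge[OF uv(1,2) degs[OF uv(3)] degs[OF uv(4)] this]
    show ?thesis by (intro conjI) (fact pe4)+
  qed
  define m12 where "m12 = m_ij E 1 2"
  define m13 where "m13 = m_ij E 1 3"
  define m22 where "m22 = m_ij E 2 2"
  define m23 where "m23 = m_ij E 2 3"
  define m33 where "m33 = m_ij E 3 3"
  define n1 where "n1 = card {v\<in>{0..<n}. degree E v = 1}"
  define n2 where "n2 = card {v\<in>{0..<n}. degree E v = 2}"
  define n3' where "n3' = card {v\<in>{0..<n}. degree E v = 3}"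
  have A: "n1 = m12 + m13"
  proof -
    have "(\<Sum>e\<in>E. cnt E 1 e) = (\<Sum>e\<in>E. Tij E 1 2 e + Tij E 1 3 e)" using pe by (intro sum.cong) auto
    then show ?thesis using sum_cnt[OF fin sub, of 1] unfolding n1_def m12_def m13_def m_ij_sum[OF fin]
      by (simp add: sum.distrib)
  qed
  have B: "2 * n2 = m12 + 2 * m22 + m23"
  proof -
    have "(\<Sum>e\<in>E. cnt E 2 e) = (\<Sum>e\<in>E. Tij E 1 2 e + 2 * Tij E 2 2 e + Tij E 2 3 e)" using pe by (intro sum.cong) auto
    then show ?thesis using sum_cnt[OF fin sub, of 2] unfolding n2_def m12_def m22_def m23_def m_ij_sum[OF fin]
      by (simp add: sum.distrib sum_distrib_left)
  qed
  have C: "3 * n3' = m13 + m23 + 2 * m33"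
  proof -
    have "(\<Sum>e\<in>E. cnt E 3 e) = (\<Sum>e\<in>E. Tij E 1 3 e + Tij E 2 3 e + 2 * Tij E 3 3 e)" using pe by (intro sum.cong) auto
    then show ?thesis using sum_cnt[OF fin sub, of 3] unfolding n3'_def m13_def m33_def m23_def m_ij_sum[OF fin]
      by (simp add: sum.distrib sum_distrib_left)
  qed
  have D: "n = m12 + m13 + m22 + m23 + m33"
  proof -
    have "card E = (\<Sum>e\<in>E. 1)" by simp
    also have "\<dots> = (\<Sum>e\<in>E. Tij E 1 2 e + Tij E 1 3 e + Tij E 2 2 e + Tij E 2 3 e + Tij E 3 3 e)"
      using pe by (intro sum.cong) auto
    finally show ?thesis using cardE unfolding m12_def m13_def m22_def m23_def m33_def m_ij_sum[OF fin]
      by (simp add: sum.distrib)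
  qed
  have NN: "n = n1 + n2 + n3'"
  proof -
    have "n = (\<Sum>v\<in>{0..<n}. 1)" by simp
    also have "\<dots> = (\<Sum>v\<in>{0..<n}. (if degree E v = 1 then 1 else 0) + (if degree E v = 2 then 1 else 0) + (if degree E v = 3 then 1 else 0))"
      by (rule sum.cong) (use degs in auto)
    also have "\<dots> = n1 + n2 + n3'" unfolding n1_def n2_def n3'_def sum.distrib
      using card_filter_sum[of "{0..<n}" "\<lambda>v. degree E v = 1"] card_filter_sum[of "{0..<n}" "\<lambda>v. degree E v = 2"]
        card_filter_sum[of "{0..<n}" "\<lambda>v. degree E v = 3"] by simp
    finally show ?thesis .
  qed
  have n13: "n1 = n3'" using A B C D NN by linarith
  have r22: "real m22 = real n - 4 * real m12 - 3 * real m13 + real m33" using A B C D NN n13 by linarith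
  have r23: "real m23 = 3 * real m12 + 2 * real m13 - 2 * real m33" using A B C D NN n13 by linarith
  show "topo_index c12 c13 c22 c23 c33 E = real n * c22 + real (m_ij E 1 2) * (c12 - 4*c22 + 3*c23)
           + real (m_ij E 1 3) * (c13 - 3*c22 + 2*c23) + real (m_ij E 3 3) * (c22 - 2*c23 + c33)"
    unfolding topo_index_def m12_def[symmetric] m13_def[symmetric] m22_def[symmetric] m23_def[symmetric] m33_def[symmetric]
    unfolding r22 r23 by (simp add: algebra_simps)
  show "m_ij E 1 2 + m_ij E 1 3 = 0 \<Longrightarrow> \<forall>v<n. degree E v = 2"
  proof -
    assume "m_ij E 1 2 + m_ij E 1 3 = 0"
    then have "n1 = 0" "n3' = 0" using A n13 unfolding m12_def m13_def by auto
    then have "{v\<in>{0..<n}. degree E v = 1} = {}" "{v\<in>{0..<n}. degree E v = 3} = {}"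
      unfolding n1_def n3'_def by auto
    then show ?thesis using degs by fastforce
  qed
  show "m_ij E 3 3 \<le> m_ij E 1 2 + m_ij E 1 3"
  proof -
    define S where "S = {v\<in>{0..<n}. degree E v = 3}"
    define A33 where "A33 = {e\<in>E. \<exists>u v. e = {u, v} \<and> u \<noteq> v \<and>
       ((degree E u = 3 \<and> degree E v = 3) \<or> (degree E u = 3 \<and> degree E v = 3))}"
    have m33A: "m33 = card A33" unfolding m33_def A33_def m_ij_def by simp
    have A33S: "e \<subseteq> S" if "e \<in> A33" for e
      using that sub unfolding A33_def S_def by fastforce
    show ?thesis
    proof (cases "S = {}")
      case True
      then have "A33 = {}" using A33S unfolding A33_def by fastforce
      then show ?thesis using m33A unfolding m33_def by simp
    next
      case False
      have Ssub: "S \<subseteq> {0..<n}" unfolding S_def by auto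
      have cardS: "card ({0..<n} - S) = n - n3'" unfolding n3'_def S_def[symmetric]
        using Ssub by (simp add: card_Diff_subset finite_subset)
      have "n - n3' \<le> card {e\<in>E. \<not> e \<subseteq> S}"
        using crossing_count[OF fin simple conn Ssub False cardS] .
      also have "\<dots> \<le> card (E - A33)" by (rule card_mono) (use fin A33S in auto)
      also have "\<dots> = n - m33" using m33A cardE by (simp add: A33_def card_Diff_subset fin)
      finally have "n - n3' \<le> n - m33" .
      moreover have "m33 \<le> n" using D by simp
      moreover have "n3' \<le> n" using NN by simp
      ultimately show ?thesis using A n13 unfolding m12_def m13_def m33_def by linarith
    qed
  qed
qed



lemma cyc_eq: "cycle_graph n = (\<lambda>i. {i, Suc i mod n}) ` {0..<n}"
  unfolding cycle_graph_def by auto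

lemma cyc_simple: assumes "n \<ge> 3" shows "simple_graph n (cycle_graph n)"
  unfolding simple_graph_def cyc_eq
proof
  fix e assume "e \<in> (\<lambda>i. {i, Suc i mod n}) ` {0..<n}"
  then obtain i where i: "i < n" "e = {i, Suc i mod n}" by auto
  have "i \<noteq> Suc i mod n"
  proof (cases "Suc i < n")
    case True then show ?thesis by simp
  next
    case False then have "Suc i = n" using i by simp
    then show ?thesis using assms by simp
  qed
  then show "\<exists>u v. e = {u, v} \<and> u \<noteq> v \<and> u < n \<and> v < n"
    using i assms by (intro exI[of _ i] exI[of _ "Suc i mod n"]) simp
qed

lemma cyc_card: assumes "n \<ge> 3" shows "card (cycle_graph n) = n"
proof -
  have "inj_on (\<lambda>i. {i, Suc i mod n}) {0..<n}"
  proof (rule inj_onI)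
    fix i j assume ij: "i \<in> {0..<n}" "j \<in> {0..<n}" "{i, Suc i mod n} = {j, Suc j mod n}"
    show "i = j"
    proof (rule ccontr)
      assume "i \<noteq> j"
      then have "i = Suc j mod n" "j = Suc i mod n" using ij(3) by (auto simp: doubleton_eq_iff)
      then have "i = Suc (Suc i mod n) mod n" by simp
      also have "\<dots> = (i + 2) mod n" by (simp add: mod_Suc_eq)
      finally have "(i + 2) mod n = i mod n" using ij by simp
      then have "n dvd 2"
        using mod_eq_dvd_iff_nat[of i "i+2" n] by simp
      then show False using assms by (auto dest: dvd_imp_le)
    qed
  qed
  then show ?thesis unfolding cyc_eq by (simp add: card_image)
qed

lemma cyc_conn: assumes "n \<ge> 3" shows "connected_graph n (cycle_graph n)"
proof -
  let ?R = "adj_rel (cycle_graph n)"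
  have symR: "sym ?R" unfolding adj_rel_def sym_def by (auto simp: insert_commute)
  have "i < n \<Longrightarrow> (0, i) \<in> ?R\<^sup>*" for i
  proof (induction i)
    case 0 then show ?case by simp
  next
    case (Suc i)
    have "{i, Suc i mod n} \<in> cycle_graph n" using Suc.prems unfolding cycle_graph_def by auto
    then have "(i, Suc i) \<in> ?R" using Suc.prems unfolding adj_rel_def by simp
    then show ?case using Suc by (meson Suc_lessD rtrancl.rtrancl_into_rtrancl)
  qed
  moreover have "(a, b) \<in> ?R\<^sup>* \<Longrightarrow> (b, a) \<in> ?R\<^sup>*" for a b
    using sym_rtrancl[OF symR] unfolding sym_def by blast
  ultimately show ?thesis unfolding connected_graph_def by (meson rtrancl_trans)
qed

lemma cyc_deg: assumes "n \<ge> 3" "v < n" shows "degree (cycle_graph n) v = 2"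
proof -
  define p where "p = (if v = 0 then n - 1 else v - 1)"
  have pn: "p < n" "Suc p mod n = v" using assms unfolding p_def by auto
  have "{e \<in> cycle_graph n. v \<in> e} = {{v, Suc v mod n}, {p, v}}"
  proof
    show "{e \<in> cycle_graph n. v \<in> e} \<subseteq> {{v, Suc v mod n}, {p, v}}"
    proof
      fix e assume "e \<in> {e \<in> cycle_graph n. v \<in> e}"
      then obtain i where i: "i < n" "e = {i, Suc i mod n}" "v \<in> e" unfolding cycle_graph_def by auto
      then consider "v = i" | "v = Suc i mod n" by auto
      then show "e \<in> {{v, Suc v mod n}, {p, v}}"
      proof cases
        case 1 then show ?thesis using i by simp
      next
        case 2
        have "i = p"
        proof (cases "Suc i < n")
          case True then show ?thesis using 2 unfolding p_def by simp
        next
          case False then have "Suc i = n" using i by simp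
          then show ?thesis using 2 unfolding p_def by simp
        qed
        then show ?thesis using i 2 by auto
      qed
    qed
  next
    show "{{v, Suc v mod n}, {p, v}} \<subseteq> {e \<in> cycle_graph n. v \<in> e}"
      using assms pn unfolding cycle_graph_def by auto
  qed
  moreover have "{v, Suc v mod n} \<noteq> {p, v}"
  proof
    assume "{v, Suc v mod n} = {p, v}"
    then have "Suc v mod n = p \<or> v = p" by (auto simp: doubleton_eq_iff)
    then show False using assms unfolding p_def
      by (cases "Suc v = n") (auto split: if_splits)
  qed
  ultimately show ?thesis unfolding degree_def by simp
qed

lemma cyc_chem: assumes "n \<ge> 3" shows "cycle_graph n \<in> chem_graphs n n"
  unfolding chem_graphs_def using cyc_simple[OF assms] cyc_conn[OF assms] cyc_card[OF assms] cyc_deg[OF assms]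
  by auto



lemma card2_eq: "card A = 2 \<Longrightarrow> a \<in> A \<Longrightarrow> b \<in> A \<Longrightarrow> a \<noteq> b \<Longrightarrow> A = {a, b}"
  by (metis card_2_iff doubleton_eq_iff insertE singletonD)

lemma two_regular_iso:
  assumes simple: "simple_graph n E" and conn: "connected_graph n E" and fin: "finite E"
    and cardE: "card E = n" and n3: "n \<ge> 3" and deg2: "\<forall>v<n. degree E v = 2"
  shows "graph_iso n E (cycle_graph n)"
proof -
  define N where "N y = {z. {y, z} \<in> E}" for y
  have N_sym: "z \<in> N y \<longleftrightarrow> y \<in> N z" for y z unfolding N_def by (simp add: insert_commute)
  have N_lt: "y < n \<and> z < n" if "z \<in> N y" for y z
    using that simple_mem[OF simple] unfolding N_def by auto
  have N_irr: "y \<notin> N y" for y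
    using simple_ne[OF simple, of y y] unfolding N_def by auto
  have N_card: "card (N y) = 2" if "y < n" for y
  proof -
    have "bij_betw (\<lambda>z. {y, z}) (N y) {e\<in>E. y \<in> e}"
    proof (rule bij_betwI')
      fix z z' assume "z \<in> N y" "z' \<in> N y"
      then have "z \<noteq> y" "z' \<noteq> y" using N_irr by auto
      then show "({y, z} = {y, z'}) = (z = z')" by (auto simp: doubleton_eq_iff)
    next
      fix z assume "z \<in> N y" then show "{y, z} \<in> {e\<in>E. y \<in> e}" unfolding N_def by simp
    next
      fix e assume e: "e \<in> {e\<in>E. y \<in> e}"
      then obtain a b where ab: "e = {a, b}" using simple unfolding simple_graph_def by blast
      show "\<exists>z\<in>N y. e = {y, z}"
      proof (cases "y = a")
        case True then show ?thesis using e ab unfolding N_def by auto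
      next
        case False then have "y = b" using e ab by auto
        then show ?thesis using e ab unfolding N_def by (auto simp: insert_commute)
      qed
    qed
    then have "card (N y) = card {e\<in>E. y \<in> e}" by (rule bij_betw_same_card)
    then show ?thesis using deg2 that unfolding degree_def by simp
  qed
  have N_other: "\<exists>z. z \<in> N y \<and> z \<noteq> x" if yl: "y < n" for x y
  proof -
    obtain a b where "N y = {a, b}" "a \<noteq> b" using N_card[OF yl] by (meson card_2_iff)
    then show ?thesis by auto
  qed
  define nxt where "nxt x y = (SOME z. z \<in> N y \<and> z \<noteq> x)" for x y
  have nxt: "nxt x y \<in> N y \<and> nxt x y \<noteq> x" if "y < n" for x y
    unfolding nxt_def by (rule someI_ex) (rule N_other[OF that])
  have n0: "0 < n" using n3 by simp
  define v1 where "v1 = (SOME z. z \<in> N 0)"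
  have v1: "v1 \<in> N 0" unfolding v1_def using N_other[OF n0] by (meson someI_ex)
  define F where "F p = (snd p, nxt (fst p) (snd p))" for p :: "nat \<times> nat"
  define st where "st k = (F ^^ k) (0, v1)" for k
  define w where "w k = fst (st k)" for k
  have st_Suc: "st (Suc k) = F (st k)" for k unfolding st_def by simp
  have snd_st: "snd (st k) = w (Suc k)" for k unfolding w_def st_Suc F_def by simp
  have w0: "w 0 = 0" unfolding w_def st_def by simp
  have wSS: "w (Suc (Suc k)) = nxt (w k) (w (Suc k))" for k
  proof -
    have "w (Suc (Suc k)) = snd (st (Suc k))" using snd_st by simp
    also have "\<dots> = nxt (w k) (snd (st k))" by (simp add: st_Suc F_def w_def)
    also have "\<dots> = nxt (w k) (w (Suc k))" by (simp add: snd_st)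
    finally show ?thesis .
  qed
  have adj: "w (Suc k) \<in> N (w k)" for k
  proof (induction k)
    case 0 then show ?case using v1 w0 snd_st[of 0] unfolding w_def st_def by simp
  next
    case (Suc k)
    have "w k \<in> N (w (Suc k))" using Suc N_sym by blast
    have "w (Suc k) < n" using N_lt[OF Suc] by simp
    then show ?case unfolding wSS using nxt by blast
  qed
  have ne2: "w (Suc (Suc k)) \<noteq> w k" for k
    unfolding wSS using nxt N_lt[OF adj[of k]] by blast
  have wlt: "w k < n" for k using N_lt[OF adj[of k]] by simp
  have ne1: "w (Suc k) \<noteq> w k" for k using adj[of k] N_irr by metis
  define P where "P p = (0 < p \<and> (\<exists>j<p. w p = w j))" for p
  have "\<not> inj_on w {0..n}"
  proof
    assume "inj_on w {0..n}"
    then have "card (w ` {0..n}) = n + 1" by (simp add: card_image)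
    moreover have "w ` {0..n} \<subseteq> {0..<n}" using wlt by auto
    then have "card (w ` {0..n}) \<le> n" by (metis card_atLeastLessThan card_mono finite_atLeastLessThan diff_zero)
    ultimately show False by simp
  qed
  then obtain i j where ij: "i \<le> n" "j \<le> n" "i \<noteq> j" "w i = w j" unfolding inj_on_def by auto
  have "\<exists>p. P p \<and> p \<le> n"
  proof (cases "i < j")
    case True then show ?thesis using ij unfolding P_def by (intro exI[of _ j]) auto
  next
    case False then have "j < i" using ij by simp
    then have "P i" unfolding P_def using ij by auto
    then show ?thesis using ij by blast
  qed
  then obtain p0 where "P p0" "p0 \<le> n" by blast
  define p where "p = (LEAST p. P p)"
  have Pp: "P p" unfolding p_def by (rule LeastI) (fact)
  have pn: "p \<le> n" using Least_le[of P p0] \<open>P p0\<close> \<open>p0 \<le> n\<close> unfolding p_def by simp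
  have injp: "inj_on w {0..<p}"
  proof (rule inj_onI, rule ccontr)
    fix a b assume ab: "a \<in> {0..<p}" "b \<in> {0..<p}" "w a = w b" "a \<noteq> b"
    show False
    proof (cases "a < b")
      case True then have "P b" using ab unfolding P_def by auto
      then show False using not_less_Least[of b P] ab unfolding p_def by auto
    next
      case False then have "P a" using ab unfolding P_def by (metis linorder_neqE_nat not_less0)
      then show False using not_less_Least[of a P] ab unfolding p_def by auto
    qed
  qed
  obtain j0 where j0: "j0 < p" "w p = w j0" using Pp unfolding P_def by auto
  have p0: "0 < p" using Pp unfolding P_def by simp
  have "p \<noteq> 1" using ne1[of 0] j0 by auto
  have "p \<noteq> 2" using ne2[of 0] ne1[of 0] ne1[of 1] j0 by (auto simp: numeral_2_eq_2 less_Suc_eq)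
  have p3: "p \<ge> 3" using p0 \<open>p \<noteq> 1\<close> \<open>p \<noteq> 2\<close> by linarith
  have wp: "w p = w 0"
  proof (rule ccontr)
    assume "w p \<noteq> w 0"
    then have "j0 > 0" using j0 by (metis neq0_conv)
    then obtain j where j: "j0 = Suc j" by (metis gr0_implies_Suc)
    have "Suc j0 \<noteq> p" using ne1[of j0] j0 by auto
    then have jp: "Suc j0 < p" using j0 by simp
    have a1: "w j \<in> N (w j0)" using adj[of j] N_sym j by simp
    have a2: "w (Suc j0) \<in> N (w j0)" using adj[of j0] by simp
    have "w j \<noteq> w (Suc j0)" using ne2[of j] j by metis
    then have NN: "N (w j0) = {w j, w (Suc j0)}" using card2_eq[OF N_card[OF wlt] a1 a2] by simp
    obtain q where q: "p = Suc q" using p0 by (metis gr0_implies_Suc)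
    have "w q \<in> N (w p)" using adj[of q] N_sym q by simp
    then have "w q = w j \<or> w q = w (Suc j0)" using NN j0 by simp
    moreover have "q < p" "j < p" "Suc j0 < p" using q j jp j0 by auto
    ultimately have "q = j \<or> q = Suc j0"
      using inj_on_eq_iff[OF injp, of q j] inj_on_eq_iff[OF injp, of q "Suc j0"] by auto
    moreover have "q \<noteq> j" using q j j0 by simp
    moreover have "q \<noteq> Suc j0" using ne2[of j0] q j0 by auto
    ultimately show False by simp
  qed
  define Cs where "Cs = w ` {0..<p}"
  have closed: "N (w i) \<subseteq> Cs" if "i < p" for i
  proof -
    obtain a b where ab: "a \<in> Cs" "b \<in> Cs" "a \<noteq> b" "a \<in> N (w i)" "b \<in> N (w i)"
    proof (cases "i = 0")
      case True
      obtain q where q: "p = Suc q" using p0 by (metis gr0_implies_Suc)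
      have "w q \<in> N (w 0)" using adj[of q] N_sym q wp by simp
      moreover have "w 1 \<in> N (w 0)" using adj[of 0] by simp
      moreover have "w 1 \<noteq> w q" using inj_on_eq_iff[OF injp, of 1 q] q p3 by auto
      moreover have "w 1 \<in> Cs" "w q \<in> Cs" unfolding Cs_def using q p3 by auto
      ultimately show ?thesis using that True by blast
    next
      case False
      then obtain h where h: "i = Suc h" by (metis not0_implies_Suc)
      have "w h \<in> N (w i)" using adj[of h] N_sym h by simp
      moreover have "w (Suc i) \<in> N (w i)" using adj[of i] by simp
      moreover have "w h \<noteq> w (Suc i)" using ne2[of h] h by metis
      moreover have "w h \<in> Cs" unfolding Cs_def using h \<open>i < p\<close> by auto
      moreover have "w (Suc i) \<in> Cs"
      proof (cases "Suc i < p")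
        case True then show ?thesis unfolding Cs_def by auto
      next
        case False then have "Suc i = p" using \<open>i < p\<close> by simp
        then show ?thesis unfolding Cs_def using wp p0 by (metis atLeastLessThan_iff image_eqI le0)
      qed
      ultimately show ?thesis using that by blast
    qed
    then have "N (w i) = {a, b}" using card2_eq[OF N_card[OF wlt]] by blast
    then show ?thesis using ab by auto
  qed
  have allC: "v \<in> Cs" if "v < n" for v
  proof -
    have "(0, v) \<in> (adj_rel E)\<^sup>*" using conn that n0 unfolding connected_graph_def by blast
    moreover have "0 \<in> Cs" unfolding Cs_def using w0 p0 by (metis atLeastLessThan_iff image_eqI le0)
    moreover have "y \<in> Cs" if xy: "{x, y} \<in> E" "x \<in> Cs" for x y
    proof -
      obtain i where "i < p" "x = w i" using xy(2) unfolding Cs_def by auto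
      then show ?thesis using closed[of i] xy(1) unfolding N_def by auto
    qed
    ultimately show ?thesis using closure_lemma[where S=Cs] by blast
  qed
  have CsEq: "Cs = {0..<n}" using allC wlt unfolding Cs_def by auto
  have "card Cs = p" unfolding Cs_def using injp by (simp add: card_image)
  then have pN: "p = n" using CsEq by simp
  have bijw: "bij_betw w {0..<n} {0..<n}" using injp CsEq pN unfolding Cs_def bij_betw_def by simp
  have wmod: "w (Suc i mod n) = w (Suc i)" if "i < n" for i
  proof (cases "Suc i < n")
    case True then show ?thesis by simp
  next
    case False then have "Suc i = n" using that by simp
    then show ?thesis using wp pN by simp
  qed
  define E' where "E' = (\<lambda>e. w ` e) ` cycle_graph n"
  have E'sub: "E' \<subseteq> E"
  proof
    fix e assume "e \<in> E'"
    then obtain i where i: "i < n" "e = w ` {i, Suc i mod n}" unfolding E'_def cycle_graph_def by auto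
    then have "e = {w i, w (Suc i)}" using wmod by simp
    then show "e \<in> E" using adj[of i] unfolding N_def by simp
  qed
  have cyc_sub: "\<forall>e\<in>cycle_graph n. e \<subseteq> {0..<n}" using simple_mem[OF cyc_simple[OF n3]] by auto
  have injimg: "inj_on (\<lambda>e. w ` e) (cycle_graph n)"
  proof (rule inj_onI)
    fix a b assume "a \<in> cycle_graph n" "b \<in> cycle_graph n" "w ` a = w ` b"
    then show "a = b" using inj_on_image_eq_iff[of w "{0..<n}" a b] bijw cyc_sub
      unfolding bij_betw_def by auto
  qed
  have "card E' = n" unfolding E'_def using card_image[OF injimg] cyc_card[OF n3] by simp
  then have EE': "E' = E" using card_subset_eq[OF fin E'sub] cardE by simp
  define f where "f = the_inv_into {0..<n} w"
  have bijf: "bij_betw f {0..<n} {0..<n}" unfolding f_def by (rule bij_betw_the_inv_into[OF bijw])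
  have finv: "f ` (w ` e) = e" if "e \<subseteq> {0..<n}" for e
  proof -
    have "f ` (w ` e) = (f \<circ> w) ` e" by (simp add: image_comp)
    also have "\<dots> = id ` e"
      using that bijw unfolding f_def bij_betw_def
      by (intro image_cong) (auto simp: the_inv_into_f_f)
    finally show ?thesis by simp
  qed
  have "(\<lambda>e. f ` e) ` E = cycle_graph n"
  proof -
    have "(\<lambda>e. f ` e) ` E = (\<lambda>e. f ` (w ` e)) ` cycle_graph n" unfolding EE'[symmetric] E'_def image_image ..
    also have "\<dots> = cycle_graph n" using finv cyc_sub by (simp cong: image_cong)
    finally show ?thesis .
  qed
  then show ?thesis unfolding graph_iso_def using bijf by blast
qed



lemma ineq:
  fixes x y z a b c :: real
  assumes "x \<ge> 0" "y \<ge> 0" "z \<ge> 0" "z \<le> x + y" "a < 0" "b < 0" "a + c < 0" "b + c < 0" "x + y > 0"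
  shows "x * a + y * b + z * c < 0"
proof (cases "c \<le> 0")
  case True
  have "z * c \<le> 0" using True assms(3) by (simp add: mult_nonneg_nonpos)
  moreover have "x * a + y * b < 0"
  proof (cases "x > 0")
    case True
    then have "x * a < 0" using assms(5) by (simp add: mult_pos_neg)
    moreover have "y * b \<le> 0" using assms(2,6) by (simp add: mult_nonneg_nonpos)
    ultimately show ?thesis by simp
  next
    case False
    then have "y > 0" using assms(1,9) by simp
    then have "y * b < 0" using assms(6) by (simp add: mult_pos_neg)
    moreover have "x * a \<le> 0" using assms(1,5) by (simp add: mult_nonneg_nonpos)
    ultimately show ?thesis by simp
  qed
  ultimately show ?thesis by simp
next
  case False
  have "z * c \<le> (x + y) * c" using False assms(4) by (simp add: mult_right_mono)
  moreover have "x * (a + c) + y * (b + c) < 0"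
  proof (cases "x > 0")
    case True
    then have "x * (a + c) < 0" using assms(7) by (simp add: mult_pos_neg)
    moreover have "y * (b + c) \<le> 0" using assms(2,8) by (simp add: mult_nonneg_nonpos)
    ultimately show ?thesis by simp
  next
    case False
    then have "y > 0" using assms(1,9) by simp
    then have "y * (b + c) < 0" using assms(8) by (simp add: mult_pos_neg)
    moreover have "x * (a + c) \<le> 0" using assms(1,7) by (simp add: mult_nonneg_nonpos)
    ultimately show ?thesis by simp
  qed
  ultimately show ?thesis by (simp add: algebra_simps)
qed

lemma m_ij_zero:
  assumes "simple_graph n E" "\<forall>v<n. degree E v = 2" "i \<noteq> 2"
  shows "m_ij E i j = 0"
proof -
  have "{e\<in>E. \<exists>u v. e = {u, v} \<and> u \<noteq> v \<and>
       ((degree E u = i \<and> degree E v = j) \<or> (degree E u = j \<and> degree E v = i))} = {}"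
  proof (rule ccontr)
    assume "\<not> ?thesis"
    then obtain e u v where "e \<in> E" "e = {u, v}"
      "(degree E u = i \<and> degree E v = j) \<or> (degree E u = j \<and> degree E v = i)" by blast
    moreover have "u < n" "v < n" using simple_mem[OF assms(1)] calculation(1,2) by auto
    ultimately show False using assms(2,3) by auto
  qed
  then show ?thesis unfolding m_ij_def by (metis card.empty)
qed

theorem corollary2:
  fixes n :: nat and c12 c13 c22 c23 c33 :: real
  assumes "n \<ge> 3"
  assumes "max (c12 - 4*c22 + 3*c23) (c13 - 3*c22 + 2*c23) < min 0 (- (c22 - 2*c23 + c33))"
  shows "cycle_graph n \<in> chem_graphs n n
    \<and> (\<forall>E \<in> chem_graphs n n. topo_index c12 c13 c22 c23 c33 E \<le> topo_index c12 c13 c22 c23 c33 (cycle_graph n))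
    \<and> (\<forall>E \<in> chem_graphs n n. topo_index c12 c13 c22 c23 c33 E = topo_index c12 c13 c22 c23 c33 (cycle_graph n)
           \<longrightarrow> graph_iso n E (cycle_graph n))"
proof -
  define a where "a = c12 - 4*c22 + 3*c23"
  define b where "b = c13 - 3*c22 + 2*c23"
  define c where "c = c22 - 2*c23 + c33"
  have abc: "a < 0" "b < 0" "a + c < 0" "b + c < 0" using assms(2) unfolding a_def b_def c_def by auto
  have cyc: "cycle_graph n \<in> chem_graphs n n" by (rule cyc_chem[OF assms(1)])
  have Icyc: "topo_index c12 c13 c22 c23 c33 (cycle_graph n) = real n * c22"
  proof -
    have z: "m_ij (cycle_graph n) 1 2 = 0" "m_ij (cycle_graph n) 1 3 = 0" "m_ij (cycle_graph n) 3 3 = 0"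
      using m_ij_zero[OF cyc_simple[OF assms(1)]] cyc_deg[OF assms(1)] by auto
    show ?thesis using key(1)[OF cyc assms(1), of c12 c13 c22 c23 c33] unfolding z by simp
  qed
  have IE: "topo_index c12 c13 c22 c23 c33 E = real n * c22 + (real (m_ij E 1 2) * a + real (m_ij E 1 3) * b + real (m_ij E 3 3) * c)"
    if "E \<in> chem_graphs n n" for E
    using key(1)[OF that assms(1), of c12 c13 c22 c23 c33] unfolding a_def b_def c_def by simp
  have strict: "real (m_ij E 1 2) * a + real (m_ij E 1 3) * b + real (m_ij E 3 3) * c < 0"
    if "E \<in> chem_graphs n n" "m_ij E 1 2 + m_ij E 1 3 \<noteq> 0" for E
  proof (rule ineq)
    show "real (m_ij E 3 3) \<le> real (m_ij E 1 2) + real (m_ij E 1 3)"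
      using key(2)[OF that(1) assms(1)] by linarith
    show "0 < real (m_ij E 1 2) + real (m_ij E 1 3)" using that(2) by linarith
  qed (use abc in auto)
  have le: "topo_index c12 c13 c22 c23 c33 E \<le> topo_index c12 c13 c22 c23 c33 (cycle_graph n)"
    if "E \<in> chem_graphs n n" for E
  proof (cases "m_ij E 1 2 + m_ij E 1 3 = 0")
    case True
    then have "m_ij E 3 3 = 0" using key(2)[OF that assms(1)] by simp
    then show ?thesis using IE[OF that] Icyc True by simp
  next
    case False
    then show ?thesis using IE[OF that] Icyc strict[OF that False] by simp
  qed
  have iso: "graph_iso n E (cycle_graph n)"
    if "E \<in> chem_graphs n n" "topo_index c12 c13 c22 c23 c33 E = topo_index c12 c13 c22 c23 c33 (cycle_graph n)" for E
  proof -
    have "m_ij E 1 2 + m_ij E 1 3 = 0"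
    proof (rule ccontr)
      assume "m_ij E 1 2 + m_ij E 1 3 \<noteq> 0"
      then show False using IE[OF that(1)] Icyc strict[OF that(1)] that(2) by simp
    qed
    then have deg2: "\<forall>v<n. degree E v = 2" by (rule key(3)[OF that(1) assms(1)])
    have simple: "simple_graph n E" and conn: "connected_graph n E" and cardE: "card E = n"
      using that(1) unfolding chem_graphs_def by auto
    have fin: "finite E" using cardE assms(1) by (metis card.infinite not_numeral_le_zero)
    show ?thesis by (rule two_regular_iso[OF simple conn fin cardE assms(1) deg2])
  qed
  show ?thesis using cyc le iso by blast
qed


end
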